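(* Fix $a>0$ and put $A=4a^2$. For $w>0$ with $A/(2w)>a$, let $S_w=[-A/(2w),A/(2w)]\times[-w/2,w/2]$ be a rectangular city of area $A$ and width $w$, and let the tram line be the segment from $(-a,0)$ to $(a,0)$ (centred in the city, along its long axis). For $p=(x,y)\in\mathbb{R}^2$ let $\mathrm{Proj}(p)=(x^t,0)$ with $x^t=\max(-a,\min(x,a))$, define $$d_{\rm tr}(p_1,p_2)=d_{\rm euc}(p_1,\mathrm{Proj}(p_1))+d_{\rm euc}(\mathrm{Proj}(p_2),p_2),$$ with $d_{\rm euc}$ the Euclidean distance, and let $I(p)=\{q: d_{\rm euc}(p,q)<d_{\rm tr}(p,q)\}$. Let $$F(w)=\frac{1}{A}\iint_{S_w}\frac{\operatorname{area}(I(p)\cap S_w)}{A}\,dp$$ be the average infeasible fraction of the city. Then $\lim_{w\to 0^+}F(w)=\tfrac12$; i.e. as the rectangular city becomes arbitrarily long and narrow at constant area, its Infeasibility Factor tends to $50\%$.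
   Context: The model: a city occupies a planar region with uniform population density; a single straight tram line runs along a segment. The tram distance $d_{\rm tr}$ corresponds to the idealized case of infinite tram speed and zero waiting time: a traveller walks from the departure point to the nearest point of the tram line, rides the tram (at no cost) to the point of the line nearest the destination, and walks to the destination. A journey from $p$ to $q$ is infeasible if the direct Euclidean distance is strictly smaller than the tram distance. The Infeasibility Factor of a city $S$ is the average over $p\in S$ (with respect to area) of $100\cdot\operatorname{area}(I(p)\cap S)/\operatorname{area}(S)$. *)

theory Defs
  imports "HOL-Analysis.Analysis"
begin

definition tram_proj :: "real \<Rightarrow> real \<times> real \<Rightarrow> real \<times> real" where
  "tram_proj a p = (max (- a) (min (fst p) a), 0)"

definition d_tr :: "real \<Rightarrow> real \<times> real \<Rightarrow> real \<times> real \<Rightarrow> real" where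
  "d_tr a p1 p2 = dist p1 (tram_proj a p1) + dist (tram_proj a p2) p2"

definition infeasible_set :: "real \<Rightarrow> real \<times> real \<Rightarrow> (real \<times> real) set" where
  "infeasible_set a p = {q. dist p q < d_tr a p q}"

definition rect_city :: "real \<Rightarrow> real \<Rightarrow> (real \<times> real) set" where
  "rect_city A w = {-(A / (2 * w)) .. A / (2 * w)} \<times> {-(w / 2) .. w / 2}"

definition rect_infeas :: "real \<Rightarrow> real \<Rightarrow> real" where
  "rect_infeas a w =
     (let A = 4 * a\<^sup>2; S = rect_city A w in
      (1 / A) * integral S (\<lambda>p. measure lebesgue (infeasible_set a p \<inter> S) / A))"

end

theory Submission imports Defs begin

lemma core_lt:
  fixes u1 u2 v1 v2 :: real
  assumes "u1 > 0" "v1 > 0"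
  shows "sqrt ((u1-v1)^2+(u2-v2)^2) < sqrt (u1^2+u2^2) + sqrt (v1^2+v2^2)"
proof -
  have "\<bar>u2\<bar> \<le> sqrt (u1^2+u2^2)" by (simp add: real_le_rsqrt)
  moreover have "\<bar>v2\<bar> \<le> sqrt (v1^2+v2^2)" by (simp add: real_le_rsqrt)
  ultimately have "\<bar>u2\<bar>*\<bar>v2\<bar> \<le> sqrt (u1^2+u2^2) * sqrt (v1^2+v2^2)"
    by (simp add: mult_mono)
  hence h: "- u1 * v1 - u2 * v2 < sqrt (u1^2+u2^2) * sqrt (v1^2+v2^2)"
  proof -
    have "- (u2 * v2) \<le> \<bar>u2\<bar>*\<bar>v2\<bar>" by (metis abs_mult abs_ge_minus_self)
    moreover have "u1 * v1 > 0" using assms by simp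
    ultimately show ?thesis using \<open>\<bar>u2\<bar>*\<bar>v2\<bar> \<le> _\<close> by linarith
  qed
  define U where "U = sqrt (u1^2+u2^2)"
  define V where "V = sqrt (v1^2+v2^2)"
  have U2: "U^2 = u1^2+u2^2" unfolding U_def by simp
  have V2: "V^2 = v1^2+v2^2" unfolding V_def by simp
  have "(U+V)^2 = U^2 + V^2 + 2*(U*V)" by (simp add: power2_sum)
  also have "\<dots> = u1^2+u2^2+v1^2+v2^2 + 2*(U*V)" using U2 V2 by simp
  finally have e: "(U+V)^2 = u1^2+u2^2+v1^2+v2^2 + 2*(U*V)" .
  have e2: "(u1-v1)^2+(u2-v2)^2 = u1^2+u2^2+v1^2+v2^2 - 2*(u1 * v1) - 2*(u2 * v2)"
    by (simp add: power2_diff)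
  have "(u1-v1)^2+(u2-v2)^2 < (U+V)^2"
    using h e e2 unfolding U_def[symmetric] V_def[symmetric] by linarith
  moreover have "U+V \<ge> 0" unfolding U_def V_def by simp
  ultimately show ?thesis unfolding U_def[symmetric] V_def[symmetric]
    using real_less_lsqrt by blast
qed

lemma sq_le: "sqrt (s^2 + t^2) \<le> \<bar>s\<bar> + \<bar>t::real\<bar>"
proof (rule real_le_lsqrt)
  show "s^2+t^2 \<le> (\<bar>s\<bar> + \<bar>t\<bar>)^2"
    by (simp add: power2_sum)
qed auto
lemma G1:
  assumes "a > 0" "x1 > a" "x2 > a"
  shows "dist (x1,y1) (x2,y2) < d_tr a (x1,y1) (x2,y2)"
proof -
  have "dist (x1,y1) (x2,y2) = sqrt (((x1-a)-(x2-a))^2 + (y1-y2)^2)"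
    by (simp add: dist_Pair_Pair dist_real_def)
  also have "\<dots> < sqrt ((x1-a)^2+y1^2) + sqrt ((x2-a)^2+(y2)^2)"
    using core_lt[of "x1-a" "x2-a" y1 y2] assms by simp
  also have "\<dots> = d_tr a (x1,y1) (x2,y2)"
    using assms by (simp add: d_tr_def tram_proj_def dist_Pair_Pair dist_real_def power2_commute)
  finally show ?thesis .
qed

lemma G1':
  assumes "a > 0" "x1 < -a" "x2 < -a"
  shows "dist (x1,y1) (x2,y2) < d_tr a (x1,y1) (x2,y2)"
proof -
  have "dist (x1,y1) (x2,y2) = sqrt (((-a-x1)-(-a-x2))^2 + (-y1-(-y2))^2)"
    by (simp add: dist_Pair_Pair dist_real_def power2_commute)
  also have "\<dots> < sqrt ((-a-x1)^2+(-y1)^2) + sqrt ((-a-x2)^2+(-y2)^2)"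
    using core_lt[of "-a-x1" "-a-x2" "-y1" "-y2"] assms by simp
  also have "\<dots> = d_tr a (x1,y1) (x2,y2)"
    using assms by (simp add: d_tr_def tram_proj_def dist_Pair_Pair dist_real_def power2_commute[of x1] power2_commute[of x2] add.commute[of x1] add.commute[of x2])
  finally show ?thesis .
qed

lemma G2:
  assumes "a > 0" "x1 \<ge> a" "x2 < -a" "\<bar>y1\<bar> \<le> w/2" "\<bar>y2\<bar> \<le> w/2" "w \<le> 2*a"
  shows "\<not> dist (x1,y1) (x2,y2) < d_tr a (x1,y1) (x2,y2)"
proof -
  have "d_tr a (x1,y1) (x2,y2) = sqrt ((x1-a)^2+y1^2) + sqrt ((-a-x2)^2+y2^2)"
    using assms by (simp add: d_tr_def tram_proj_def dist_Pair_Pair dist_real_def power2_commute)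
  also have "\<dots> \<le> (x1-a) + \<bar>y1\<bar> + ((-a-x2) + \<bar>y2\<bar>)"
    using sq_le[of "x1-a" y1] sq_le[of "-a-x2" y2] assms by simp
  also have "\<dots> \<le> x1 - x2" using assms by simp
  also have "\<dots> \<le> dist (x1,y1) (x2,y2)"
    by (simp add: dist_Pair_Pair dist_real_def real_le_rsqrt)
  finally show ?thesis by simp
qed

lemma G2':
  assumes "a > 0" "x1 \<le> -a" "x2 > a" "\<bar>y1\<bar> \<le> w/2" "\<bar>y2\<bar> \<le> w/2" "w \<le> 2*a"
  shows "\<not> dist (x1,y1) (x2,y2) < d_tr a (x1,y1) (x2,y2)"
proof -
  have "d_tr a (x1,y1) (x2,y2) = sqrt ((-a-x1)^2+y1^2) + sqrt ((x2-a)^2+y2^2)"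
    using assms by (simp add: d_tr_def tram_proj_def dist_Pair_Pair dist_real_def power2_commute add.commute[of x1 a])
  also have "\<dots> \<le> (-a-x1) + \<bar>y1\<bar> + ((x2-a) + \<bar>y2\<bar>)"
    using sq_le[of "-a-x1" y1] sq_le[of "x2-a" y2] assms by simp
  also have "\<dots> \<le> x2 - x1" using assms by simp
  also have "\<dots> \<le> dist (x1,y1) (x2,y2)"
    by (simp add: dist_Pair_Pair dist_real_def real_le_rsqrt power2_commute[of x1])
  finally show ?thesis by simp
qed


lemma cont_proj: "continuous_on UNIV (tram_proj a)"
  unfolding tram_proj_def by (intro continuous_intros)

lemma cont_dtr: "continuous_on UNIV (\<lambda>z. d_tr a (fst z) (snd z))"
  unfolding d_tr_def
  by (intro continuous_intros continuous_on_compose2[OF cont_proj]) auto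

definition QQ :: "real \<Rightarrow> (real \<times> real) set \<Rightarrow> ((real \<times> real) \<times> (real \<times> real)) set" where
  "QQ a S = {z. snd z \<in> S \<and> dist (fst z) (snd z) < d_tr a (fst z) (snd z)}"

lemma QQ_borel: assumes "closed S" shows "QQ a S \<in> sets borel"
proof -
  have o: "open {z::(real \<times> real) \<times> (real \<times> real). dist (fst z) (snd z) < d_tr a (fst z) (snd z)}"
    by (intro open_Collect_less continuous_intros cont_dtr)
  have c: "closed {z::(real \<times> real) \<times> (real \<times> real). snd z \<in> S}"
  proof -
    have "continuous_on UNIV (snd::(real \<times> real) \<times> (real \<times> real) \<Rightarrow> real \<times> real)"
      by (intro continuous_intros)
    from closed_vimage[OF assms this] show ?thesis by (simp add: vimage_def)
  qed
  have "QQ a S = {z. snd z \<in> S} \<inter> {z. dist (fst z) (snd z) < d_tr a (fst z) (snd z)}"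
    unfolding QQ_def by auto
  thus ?thesis using o c by (simp add: borel_open borel_closed sets.Int)
qed

lemma infeas_borel: assumes "closed S" shows "infeasible_set a p \<inter> S \<in> sets borel"
proof -
  have "infeasible_set a p \<inter> S = Pair p -` QQ a S"
    unfolding QQ_def infeasible_set_def by auto
  moreover have "Pair p \<in> borel_measurable borel"
    by (rule borel_measurable_continuous_onI) (intro continuous_intros)
  ultimately show ?thesis using QQ_borel[OF assms]
    by (metis measurable_sets space_borel vimage_Int inf_top.right_neutral)
qed

lemma meas_f: assumes "closed S"
  shows "(\<lambda>p. measure lborel (infeasible_set a p \<inter> S)) \<in> borel_measurable lborel"
proof -
  have "QQ a S \<in> sets (lborel \<Otimes>\<^sub>M lborel)"
    unfolding lborel_prod using QQ_borel[OF assms] by simp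
  hence m: "(\<lambda>p. emeasure lborel (Pair p -` QQ a S)) \<in> borel_measurable lborel"
    by (rule lborel.measurable_emeasure_Pair)
  have "\<And>p. Pair p -` QQ a S = infeasible_set a p \<inter> S"
    unfolding QQ_def infeasible_set_def by auto
  hence "(\<lambda>p. measure lborel (infeasible_set a p \<inter> S)) = (\<lambda>p. enn2real (emeasure lborel (Pair p -` QQ a S)))"
    by (simp add: measure_def)
  thus ?thesis using m by simp
qed


lemma box_meas:
  fixes x0 x1 y0 y1 :: real
  assumes "x0 \<le> x1" "y0 \<le> y1"
  shows "measure lborel (cbox (x0,y0) (x1,y1)) = (x1-x0)*(y1-y0)"
  using assms by (simp add: content_Pair)

lemma int_box:
  fixes u v :: "real \<times> real"
  assumes "cbox u v \<subseteq> S"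
  shows "((\<lambda>p. if p \<in> cbox u v then c else 0) has_integral (measure lborel (cbox u v) * c)) S"
proof -
  have "((\<lambda>p. c) has_integral (measure lborel (cbox u v) * c)) (cbox u v)"
    using has_integral_const[of c u v] by simp
  thus ?thesis using has_integral_restrict[OF assms, of "\<lambda>p. c"] by simp
qed

lemma city_eq: "rect_city A w = cbox (-(A/(2*w)), -(w/2)) (A/(2*w), w/2)"
  unfolding rect_city_def by (simp add: cbox_Pair_eq)

lemma integrable_f:
  assumes "S = cbox u v"
  shows "(\<lambda>p. measure lebesgue (infeasible_set a p \<inter> S) / c) integrable_on S"
proof -
  have cl: "closed S" using assms closed_cbox by blast
  have eq: "\<And>p. measure lebesgue (infeasible_set a p \<inter> S) = measure lborel (infeasible_set a p \<inter> S)"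
    using infeas_borel[OF cl] by simp
  have "set_integrable lborel S (\<lambda>p. measure lborel (infeasible_set a p \<inter> S) / c)"
    unfolding set_integrable_def
  proof (rule integrableI_bounded_set[where A=S and B="measure lborel S / \<bar>c\<bar>"])
    show "S \<in> sets lborel" using cl by simp
    show "emeasure lborel S < \<infinity>" using assms fmeasurable_cbox by (simp add: fmeasurable_def)
    show "(\<lambda>x. indicator S x *\<^sub>R (measure lborel (infeasible_set a x \<inter> S) / c)) \<in> borel_measurable lborel"
      using cl by (intro borel_measurable_scaleR borel_measurable_indicator borel_measurable_divide meas_f[OF cl] borel_measurable_const) auto
    have "\<And>x. measure lborel (infeasible_set a x \<inter> S) \<le> measure lborel S"
      using assms infeas_borel[OF cl]
      by (intro measure_mono_fmeasurable) auto
    thus "AE x in lborel. x \<in> S \<longrightarrow> norm (indicator S x *\<^sub>R (measure lborel (infeasible_set a x \<inter> S) / c)) \<le> measure lborel S / \<bar>c\<bar>"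
      by (intro AE_I2) (auto simp: divide_right_mono)
    show "AE x in lborel. x \<notin> S \<longrightarrow> indicator S x *\<^sub>R (measure lborel (infeasible_set a x \<inter> S) / c) = 0"
      by simp
  qed
  from set_borel_integral_eq_integral(1)[OF this] show ?thesis by (simp add: eq)
qed


lemma bounds:
  assumes a: "a > 0" and w: "0 < w" "w \<le> a"
  shows "(a-w)^2/(2*a^2) \<le> rect_infeas a w \<and> rect_infeas a w \<le> 1/2 + w/(2*a) - w^2/(8*a^2)"
proof -
  define A where "A = 4*a^2"
  define L where "L = A/(2*w)"
  define h where "h = w/2"
  have A0: "A > 0" using a by (simp add: A_def)
  have Lw: "L*w = 2*a^2" using w by (simp add: L_def A_def field_simps)
  have "2*a*w \<le> 2*a^2" using a w by (simp add: power2_eq_square)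
  hence "2*a*w \<le> L*w" using Lw by simp
  hence L2a: "2*a \<le> L" using w by simp
  have h0: "h > 0" "h - -h = w" "h \<le> a" using w by (auto simp: h_def)
  define S where "S = rect_city A w"
  have Seq: "S = cbox (-L,-h) (L,h)" using city_eq unfolding S_def L_def h_def by simp
  have clS: "closed S" using Seq closed_cbox by blast
  define f where "f p = measure lebesgue (infeasible_set a p \<inter> S)" for p
  have f_eq: "f p = measure lborel (infeasible_set a p \<inter> S)" for p
    using infeas_borel[OF clS] by (simp add: f_def)
  have fm: "infeasible_set a p \<inter> S \<in> fmeasurable lborel" for p
    using fmeasurableI2[OF fmeasurable_cbox[of "(-L,-h)" "(L,h)"], of "infeasible_set a p \<inter> S"]
      infeas_borel[OF clS] Seq by auto
  have mS: "measure lborel S = 2*L*w" using Seq box_meas[of "-L" L "-h" h] L2a a h0 by simp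
  define R where "R = cbox (2*a,-h) (L,h)"
  define Lf where "Lf = cbox (-L,-h) (-2*a,h)"
  define M where "M = cbox (-a,-h) (a,h)"
  define k where "k = (L-2*a)*w"
  define c1 where "c1 = (L+a)*w"
  define c2 where "c2 = (L-a)*w"
  have mR: "measure lborel R = k" unfolding R_def k_def using box_meas[of "2*a" L "-h" h] L2a h0 by simp
  have mLf: "measure lborel Lf = k" unfolding Lf_def k_def using box_meas[of "-L" "-2*a" "-h" h] L2a h0 by simp
  have mM: "measure lborel M = 2*a*w" unfolding M_def using box_meas[of "-a" a "-h" h] a h0 by simp
  have RS: "R \<subseteq> S" unfolding R_def Seq using L2a a h0 by (auto simp: cbox_Pair_eq)
  have LfS: "Lf \<subseteq> S" unfolding Lf_def Seq using L2a a h0 by (auto simp: cbox_Pair_eq)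
  have MS: "M \<subseteq> S" unfolding M_def Seq using L2a a h0 by (auto simp: cbox_Pair_eq)
  have low: "(if p \<in> R then k/A else 0) + (if p \<in> Lf then k/A else 0) \<le> f p / A" if pS: "p \<in> S" for p
  proof -
    obtain x1 y1 where p: "p = (x1,y1)" by fastforce
    have f0: "0 \<le> f p / A" using A0 by (simp add: f_def)
    show ?thesis
    proof (cases "p \<in> R")
      case True
      hence x1: "x1 \<ge> 2*a" unfolding R_def p by (simp add: cbox_Pair_eq)
      hence nL: "p \<notin> Lf" unfolding Lf_def p using a by (simp add: cbox_Pair_eq)
      have "R \<subseteq> infeasible_set a p \<inter> S"
      proof
        fix q assume q: "q \<in> R"
        obtain x2 y2 where qq: "q = (x2,y2)" by fastforce
        have "x2 \<ge> 2*a" using q unfolding R_def qq by (simp add: cbox_Pair_eq)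
        hence "dist p q < d_tr a p q" unfolding p qq using G1[of a x1 x2 y1 y2] a x1 by simp
        thus "q \<in> infeasible_set a p \<inter> S" using q RS by (auto simp: infeasible_set_def)
      qed
      hence "measure lborel R \<le> f p" unfolding f_eq using fm[of p]
        by (intro measure_mono_fmeasurable) (auto simp: R_def)
      thus ?thesis using True nL mR A0 by (simp add: divide_right_mono)
    next
      case nR: False
      show ?thesis
      proof (cases "p \<in> Lf")
        case True
        hence x1: "x1 \<le> -2*a" unfolding Lf_def p by (simp add: cbox_Pair_eq)
        have "Lf \<subseteq> infeasible_set a p \<inter> S"
        proof
          fix q assume q: "q \<in> Lf"
          obtain x2 y2 where qq: "q = (x2,y2)" by fastforce
          have "x2 \<le> -2*a" using q unfolding Lf_def qq by (simp add: cbox_Pair_eq)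
          hence "dist p q < d_tr a p q" unfolding p qq using G1'[of a x1 x2 y1 y2] a x1 by simp
          thus "q \<in> infeasible_set a p \<inter> S" using q LfS by (auto simp: infeasible_set_def)
        qed
        hence "measure lborel Lf \<le> f p" unfolding f_eq using fm[of p]
          by (intro measure_mono_fmeasurable) (auto simp: Lf_def)
        thus ?thesis using True nR mLf A0 by (simp add: divide_right_mono)
      next
        case False
        thus ?thesis using nR f0 by simp
      qed
    qed
  qed
  have up: "f p / A \<le> c1/A + (if p \<in> M then c2/A else 0)" if pS: "p \<in> S" for p
  proof -
    obtain x1 y1 where p: "p = (x1,y1)" by fastforce
    have y1: "\<bar>y1\<bar> \<le> w/2" and x1b: "-L \<le> x1" "x1 \<le> L" using pS unfolding Seq p h_def by (auto simp: cbox_Pair_eq)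
    show ?thesis
    proof (cases "p \<in> M")
      case True
      have sb: "infeasible_set a p \<inter> S \<in> sets lborel" using infeas_borel[OF clS] by simp
      have Sf: "S \<in> fmeasurable lborel" using Seq by simp
      have "f p \<le> measure lborel S" unfolding f_eq
        by (rule measure_mono_fmeasurable[OF Int_lower2 sb Sf])
      hence "f p \<le> c1 + c2" using mS by (simp add: c1_def c2_def algebra_simps)
      thus ?thesis using True A0 by (simp add: divide_right_mono add_divide_distrib[symmetric])
    next
      case False
      hence "x1 > a \<or> x1 < -a" using y1 unfolding M_def p h_def by (auto simp: cbox_Pair_eq)
      hence "f p \<le> c1"
      proof
        assume x1: "x1 > a"
        have "infeasible_set a p \<inter> S \<subseteq> cbox (-a,-h) (L,h)"
        proof
          fix q assume q: "q \<in> infeasible_set a p \<inter> S"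
          obtain x2 y2 where qq: "q = (x2,y2)" by fastforce
          have qS: "\<bar>y2\<bar> \<le> w/2" "-L \<le> x2" "x2 \<le> L" "-h \<le> y2" "y2 \<le> h"
            using q unfolding Seq qq h_def by (auto simp: cbox_Pair_eq)
          have "dist p q < d_tr a p q" using q by (simp add: infeasible_set_def)
          hence "\<not> x2 < -a" using G2[of a x1 x2 y1 w y2] a x1 y1 qS w unfolding p qq by auto
          thus "q \<in> cbox (-a,-h) (L,h)" using qS unfolding qq by (simp add: cbox_Pair_eq)
        qed
        hence "f p \<le> measure lborel (cbox (-a,-h) (L,h))" unfolding f_eq
          by (intro measure_mono_fmeasurable) (auto simp: infeas_borel[OF clS])
        also have "\<dots> = c1" using box_meas[of "-a" L "-h" h] L2a a h0 by (simp add: c1_def)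
        finally show ?thesis .
      next
        assume x1: "x1 < -a"
        have "infeasible_set a p \<inter> S \<subseteq> cbox (-L,-h) (a,h)"
        proof
          fix q assume q: "q \<in> infeasible_set a p \<inter> S"
          obtain x2 y2 where qq: "q = (x2,y2)" by fastforce
          have qS: "\<bar>y2\<bar> \<le> w/2" "-L \<le> x2" "x2 \<le> L" "-h \<le> y2" "y2 \<le> h"
            using q unfolding Seq qq h_def by (auto simp: cbox_Pair_eq)
          have "dist p q < d_tr a p q" using q by (simp add: infeasible_set_def)
          hence "\<not> x2 > a" using G2'[of a x1 x2 y1 w y2] a x1 y1 qS w unfolding p qq by auto
          thus "q \<in> cbox (-L,-h) (a,h)" using qS unfolding qq by (simp add: cbox_Pair_eq)
        qed
        hence "f p \<le> measure lborel (cbox (-L,-h) (a,h))" unfolding f_eq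
          by (intro measure_mono_fmeasurable) (auto simp: infeas_borel[OF clS])
        also have "\<dots> = c1" using box_meas[of "-L" a "-h" h] L2a a h0 by (simp add: c1_def algebra_simps)
        finally show ?thesis .
      qed
      thus ?thesis using False A0 by (simp add: divide_right_mono)
    qed
  qed
  have intf: "(\<lambda>p. f p / A) integrable_on S"
    unfolding f_def using integrable_f[OF Seq] by simp
  have il: "((\<lambda>p. (if p \<in> R then k/A else 0) + (if p \<in> Lf then k/A else 0)) has_integral (k * (k/A) + k * (k/A))) S"
    using has_integral_add[OF int_box[OF RS[unfolded R_def], of "k/A"] int_box[OF LfS[unfolded Lf_def], of "k/A"]]
      mR mLf unfolding R_def Lf_def by simp
  have iu: "((\<lambda>p. c1/A + (if p \<in> M then c2/A else 0)) has_integral (2*L*w * (c1/A) + 2*a*w * (c2/A))) S"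
  proof -
    have "((\<lambda>p. c1/A) has_integral (measure lborel S * (c1/A))) S"
      using has_integral_const[of "c1/A" "(-L,-h)" "(L,h)"] Seq by simp
    from has_integral_add[OF this int_box[OF MS[unfolded M_def], of "c2/A"]]
    show ?thesis using mS mM unfolding M_def by simp
  qed
  have I1: "k * (k/A) + k * (k/A) \<le> integral S (\<lambda>p. f p / A)"
    using integral_le[OF has_integral_integrable[OF il] intf low] integral_unique[OF il] by simp
  have I2: "integral S (\<lambda>p. f p / A) \<le> 2*L*w * (c1/A) + 2*a*w * (c2/A)"
    using integral_le[OF intf has_integral_integrable[OF iu] up] integral_unique[OF iu] by simp
  have RI: "rect_infeas a w = (1/A) * integral S (\<lambda>p. f p / A)"
    by (simp add: rect_infeas_def Let_def A_def S_def f_def)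
  have kk: "k = 2*a*(a-w)" using Lw by (simp add: k_def algebra_simps power2_eq_square)
  have cc1: "c1 = 2*a^2 + a*w" using Lw by (simp add: c1_def algebra_simps)
  have cc2: "c2 = 2*a^2 - a*w" using Lw by (simp add: c2_def algebra_simps)
  have e1: "(1/A) * (k * (k/A) + k * (k/A)) = (a-w)^2/(2*a^2)"
    using a unfolding kk A_def by (simp add: field_simps power2_eq_square)
  have e2: "(1/A) * (2*L*w * (c1/A) + 2*a*w * (c2/A)) = 1/2 + w/(2*a) - w^2/(8*a^2)"
  proof -
    have Lw2: "2*L*w = 4*a^2" using Lw by simp
    show ?thesis using a unfolding Lw2 cc1 cc2 A_def by (simp add: field_simps power2_eq_square)
  qed
  have "(1/A) * (k * (k/A) + k * (k/A)) \<le> rect_infeas a w"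
    unfolding RI using I1 A0 by (intro mult_left_mono) auto
  moreover have "rect_infeas a w \<le> (1/A) * (2*L*w * (c1/A) + 2*a*w * (c2/A))"
    unfolding RI using I2 A0 by (intro mult_left_mono) auto
  ultimately show ?thesis using e1 e2 by simp
qed


theorem mainTheorem2:
  fixes a :: real
  assumes "a > 0"
  shows "(rect_infeas a \<longlongrightarrow> 1 / 2) (at_right 0)"
proof (rule tendsto_sandwich)
  have ev: "eventually (\<lambda>w. 0 < w \<and> w \<le> a) (at_right (0::real))"
    unfolding eventually_at_right[OF assms] by (intro exI[of _ a]) (use assms in auto)
  show "eventually (\<lambda>w. (a-w)^2/(2*a^2) \<le> rect_infeas a w) (at_right 0)"
    using ev by eventually_elim (use bounds[OF assms] in blast)
  show "eventually (\<lambda>w. rect_infeas a w \<le> 1/2 + w/(2*a) - w^2/(8*a^2)) (at_right 0)"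
    using ev by eventually_elim (use bounds[OF assms] in blast)
  have "((\<lambda>w. (a-w)^2/(2*a^2)) \<longlongrightarrow> (a-0)^2/(2*a^2)) (at_right 0)"
    using assms by (intro tendsto_intros) auto
  thus "((\<lambda>w. (a-w)^2/(2*a^2)) \<longlongrightarrow> 1/2) (at_right 0)"
    using assms by (simp add: power2_eq_square)
  have "((\<lambda>w. 1/2 + w/(2*a) - w^2/(8*a^2)) \<longlongrightarrow> 1/2 + 0/(2*a) - 0^2/(8*a^2)) (at_right 0)"
    using assms by (intro tendsto_intros) auto
  thus "((\<lambda>w. 1/2 + w/(2*a) - w^2/(8*a^2)) \<longlongrightarrow> 1/2) (at_right 0)" by simp
qed

end
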